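(* Let $f:[-1,1]\to\mathbb R^+$ be monotone and continuous, with $\varphi(x,y)=f(\langle x,y\rangle)$ a Markov kernel satisfying $\lambda(\varphi)>0$ and $|\lambda_i|\le\lambda(\varphi)$ for all $i\ge1$. Let $y\in\mathbb{S}^{d-1}$ and $\mu=f(\langle\cdot,y\rangle)\,d\sigma$. Then for any $w\in\mathbb{S}^{d-1}$, $\mu\in\mathrm{DPS}_w(2p_w)$, where $p_w=\min(\mu(H_w^+),\mu(H_w^-))$.
   Context: $\sigma$ is the uniform probability measure on $\mathbb{S}^{d-1}$; Markov kernel means $\int\varphi(x,y)\,d\sigma(y)=1$ for all $x$. $\lambda_i$ is the eigenvalue of $g\mapsto\int\varphi(\cdot,y)g(y)\,d\sigma(y)$ on the $i$-th spherical harmonic $\psi_i$ ($\psi_0\equiv1$, $\psi_1,\dots,\psi_d$ linear), $\lambda(\varphi):=\lambda_1=\dots=\lambda_d$. $H_w^+=\{x\in\mathbb{S}^{d-1}:\langle x,w\rangle\ge0\}$, $H_w^-=\{x:\langle x,w\rangle<0\}$. For $R=\mathrm I_d-2ww^T$, a probability measure $\mu$ is in $\mathrm{DPS}_w(\varepsilon)$ if $\mu=(1-\varepsilon)\mu_w+\varepsilon\mu_w^s$ for probability measures $\mu_w,\mu_w^s$ with $R_*\mu_w^s=\mu_w^s$. *)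

theory Defs
  imports "HOL-Analysis.Analysis" "HOL-Probability.Probability"
begin

text \<open>Uniform probability measure sigma on the unit sphere of 'a (dimension d = DIM('a)):
  push-forward of the normalised Lebesgue measure on the unit ball under x |-> x / |x|
  (the cone-measure description of normalised surface measure).\<close>
definition sphere_unif :: "'a::euclidean_space measure" where
  "sphere_unif = distr (uniform_measure lborel (ball 0 1)) borel (\<lambda>x. sgn x)"

definition kernel_op :: "(real \<Rightarrow> real) \<Rightarrow> ('a::euclidean_space \<Rightarrow> real) \<Rightarrow> 'a \<Rightarrow> real" where
  "kernel_op f g x = (\<integral>y. f (x \<bullet> y) * g y \<partial>sphere_unif)"

definition markov_zonal :: "'a::euclidean_space itself \<Rightarrow> (real \<Rightarrow> real) \<Rightarrow> bool" where
  "markov_zonal _ f \<longleftrightarrow> (\<forall>x::'a \<in> sphere 0 1. (\<integral>y. f (x \<bullet> y) \<partial>(sphere_unif::'a measure)) = 1)"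

definition laplacian :: "('a::euclidean_space \<Rightarrow> real) \<Rightarrow> 'a \<Rightarrow> real" where
  "laplacian p x = (\<Sum>b\<in>Basis. deriv (deriv (\<lambda>t. p (x + t *\<^sub>R b))) 0)"

definition spherical_harmonic :: "nat \<Rightarrow> ('a::euclidean_space \<Rightarrow> real) \<Rightarrow> bool" where
  "spherical_harmonic k g \<longleftrightarrow>
     (\<exists>p::'a \<Rightarrow> real. polynomial_function p
        \<and> (\<forall>t x. p (t *\<^sub>R x) = t ^ k * p x)
        \<and> (\<forall>x. laplacian p x = 0)
        \<and> (\<forall>x\<in>sphere 0 1. g x = p x))"

definition reflect :: "'a::euclidean_space \<Rightarrow> 'a \<Rightarrow> 'a" where
  "reflect w x = x - (2 * (x \<bullet> w)) *\<^sub>R w"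

definition DPS :: "'a::euclidean_space \<Rightarrow> real \<Rightarrow> 'a measure \<Rightarrow> bool" where
  "DPS w \<epsilon> \<mu> \<longleftrightarrow>
     (\<exists>\<nu>1 \<nu>2. prob_space \<nu>1 \<and> prob_space \<nu>2
        \<and> sets \<nu>1 = sets borel \<and> sets \<nu>2 = sets borel
        \<and> emeasure \<nu>1 (sphere 0 1) = 1 \<and> emeasure \<nu>2 (sphere 0 1) = 1
        \<and> distr \<nu>2 borel (reflect w) = \<nu>2
        \<and> (\<forall>A\<in>sets borel. measure \<mu> A = (1 - \<epsilon>) * measure \<nu>1 A + \<epsilon> * measure \<nu>2 A))"

definition halfspace_pos :: "'a::euclidean_space \<Rightarrow> 'a set" where
  "halfspace_pos w = {x \<in> sphere 0 1. x \<bullet> w \<ge> 0}"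

definition halfspace_neg :: "'a::euclidean_space \<Rightarrow> 'a set" where
  "halfspace_neg w = {x \<in> sphere 0 1. x \<bullet> w < 0}"

end

theory Submission
  imports Defs
begin

lemma reflect_linear: "linear (reflect w)"
  unfolding reflect_def by (intro linearI) (auto simp: algebra_simps inner_add_left)

lemma reflect_inner: "norm w = 1 \<Longrightarrow> reflect w x \<bullet> reflect w z = x \<bullet> z"
  unfolding reflect_def
  by (simp add: inner_diff_left inner_diff_right algebra_simps dot_square_norm power2_eq_square inner_commute)

lemma reflect_invol: "norm w = 1 \<Longrightarrow> reflect w (reflect w x) = x"
  unfolding reflect_def
  by (simp add: inner_diff_left algebra_simps dot_square_norm power2_eq_square)

lemma reflect_norm: "norm w = 1 \<Longrightarrow> norm (reflect w x) = norm x"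
  by (metis reflect_inner norm_eq_sqrt_inner)

lemma reflect_orth: "norm w = 1 \<Longrightarrow> orthogonal_transformation (reflect w)"
  by (simp add: orthogonal_transformation_def reflect_linear reflect_inner)

lemma reflect_scale: "reflect w (c *\<^sub>R x) = c *\<^sub>R reflect w x"
  unfolding reflect_def by (simp add: algebra_simps)

lemma reflect_sgn: "norm w = 1 \<Longrightarrow> reflect w (sgn x) = sgn (reflect w x)"
  by (simp add: sgn_div_norm reflect_norm reflect_scale)

lemma reflect_meas[measurable]: "reflect w \<in> borel_measurable borel"
  unfolding reflect_def by measurable

lemma U_prob: "prob_space (uniform_measure lborel (ball (0::'a::euclidean_space) 1))"
proof -
  have pos: "unit_ball_vol (real DIM('a)) > 0" by simp
  have e: "emeasure lborel (ball (0::'a) 1) = ennreal (unit_ball_vol (real DIM('a)))"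
    by (simp add: emeasure_ball)
  show ?thesis by (rule prob_space_uniform_measure) (use pos in \<open>simp_all add: e less_imp_neq[symmetric]\<close>)
qed

lemma emeasure_lebesgue_ball_any:
  assumes "r \<ge> 0" shows "emeasure lebesgue (ball (c::'a::euclidean_space) r) = emeasure lebesgue (ball (0::'a) r)"
proof -
  have "emeasure lebesgue (ball c r) = emeasure lborel (ball c r)" by (simp)
  also have "\<dots> = emeasure lborel (ball (0::'a) r)" using assms by (simp add: emeasure_ball)
  finally show ?thesis by simp
qed

lemma open_orth_measure:
  fixes G :: "'a::euclidean_space set" and T :: "'a \<Rightarrow> 'a"
  assumes T: "orthogonal_transformation T" and G: "open G"
  shows "T ` G \<in> sets lebesgue \<and> emeasure lebesgue (T ` G) = emeasure lebesgue G"
proof -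
  let ?K = "{(c,r). 0 < r \<and> ball c r \<subseteq> G}"
  have cov: "\<exists>i. i \<in> ?K \<and> x \<in> ball (fst i) (snd i) \<and> snd i < d" if "x \<in> G" "0 < d" for x d
  proof -
    obtain e where e: "e > 0" "ball x e \<subseteq> G" using G \<open>x \<in> G\<close> open_contains_ball by blast
    show ?thesis using e \<open>0 < d\<close>
      by (intro exI[of _ "(x, min e (d/2))"]) auto
  qed
  obtain C where C: "countable C" "C \<subseteq> ?K"
     "pairwise (\<lambda>i j. disjnt (ball (fst i) (snd i)) (ball (fst j) (snd j))) C"
     "negligible (G - (\<Union>i \<in> C. ball (fst i) (snd i)))"
    using Vitali_covering_theorem_balls[of G ?K fst snd, OF cov] by blast
  define U where "U = (\<Union>i \<in> C. ball (fst i) (snd i))"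
  have UG: "U \<subseteq> G" using C(2) by (force simp: U_def)
  have Uo: "open U" by (auto simp: U_def)
  define N where "N = G - U"
  have N: "N \<in> null_sets lebesgue" using C(4) by (simp add: N_def U_def negligible_iff_null_sets)
  have lin: "linear T" using T by (simp add: orthogonal_transformation_linear)
  have inj: "inj T" using T by (meson orthogonal_transformation_inj)
  have "negligible N" using N by (simp add: negligible_iff_null_sets)
  then have "negligible (T ` N)"
    using negligible_differentiable_image_negligible[of N T] lin
    by (simp add: linear_imp_differentiable_on)
  then have TN: "T ` N \<in> null_sets lebesgue" by (simp add: negligible_iff_null_sets)
  have GUN: "G = U \<union> N" using UG by (auto simp: N_def)
  have TGUN: "T ` G = T ` U \<union> T ` N" using GUN by auto
  have TU: "T ` U = (\<Union>i \<in> C. ball (T (fst i)) (snd i))"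
    by (simp add: U_def image_UN image_orthogonal_transformation_ball[OF T])
  have TUo: "open (T ` U)" unfolding TU by auto
  have disj1: "disjoint_family_on (\<lambda>i. ball (fst i) (snd i)) C"
    using C(3) by (auto simp: disjoint_family_on_def pairwise_def disjnt_def)
  have disj2: "disjoint_family_on (\<lambda>i. ball (T (fst i)) (snd i)) C"
  proof -
    have "disjoint_family_on (\<lambda>i. T ` ball (fst i) (snd i)) C"
      using disj1 unfolding disjoint_family_on_def by (metis image_Int[OF inj] image_empty)
    then show ?thesis by (simp add: image_orthogonal_transformation_ball[OF T])
  qed
  have "emeasure lebesgue (T ` G) = emeasure lebesgue (T ` U)"
    unfolding TGUN using TN TUo by (intro emeasure_Un_null_set) auto
  also have "\<dots> = (\<integral>\<^sup>+i. emeasure lebesgue (ball (T (fst i)) (snd i)) \<partial>count_space C)"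
    unfolding TU by (rule emeasure_UN_countable) (use C(1) disj2 in auto)
  also have "\<dots> = (\<integral>\<^sup>+i. emeasure lebesgue (ball (fst i) (snd i)) \<partial>count_space C)"
  proof (intro nn_integral_cong)
    fix i assume "i \<in> space (count_space C)"
    then have "snd i \<ge> 0" using C(2) by auto
    then show "emeasure lebesgue (ball (T (fst i)) (snd i)) = emeasure lebesgue (ball (fst i) (snd i))"
      using emeasure_lebesgue_ball_any[of "snd i" "T (fst i)"] emeasure_lebesgue_ball_any[of "snd i" "fst i"]
      by simp
  qed
  also have "\<dots> = emeasure lebesgue U"
    unfolding U_def by (rule emeasure_UN_countable[symmetric]) (use C(1) disj1 in auto)
  also have "\<dots> = emeasure lebesgue G"
    unfolding GUN using N Uo by (intro emeasure_Un_null_set[symmetric]) auto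
  finally show ?thesis using TN TUo TGUN by auto
qed

lemma U_inv:
  assumes w: "norm w = 1"
  shows "distr (uniform_measure lborel (ball 0 1)) borel (reflect w) = uniform_measure lborel (ball (0::'a::euclidean_space) 1)"
proof -
  let ?U = "uniform_measure lborel (ball (0::'a) 1)"
  let ?R = "reflect w"
  have eqs: "ball 0 1 \<inter> ?R -` A = ?R ` (ball 0 1 \<inter> A)" for A
  proof (intro equalityI subsetI)
    fix x assume "x \<in> ball 0 1 \<inter> reflect w -` A"
    then show "x \<in> reflect w ` (ball 0 1 \<inter> A)"
      using w by (intro image_eqI[where x="reflect w x"]) (auto simp: reflect_norm reflect_invol)
  qed (use w in \<open>auto simp: reflect_norm reflect_invol\<close>)
  interpret U: prob_space ?U by (rule U_prob)
  show ?thesis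
  proof (rule measure_eqI_generator_eq[where E="{S. open S}" and \<Omega>=UNIV and A="\<lambda>_. UNIV"])
    show "Int_stable {S::'a set. open S}" by (auto simp: Int_stable_def)
    show "{S::'a set. open S} \<subseteq> Pow UNIV" by auto
    show "sets (distr ?U borel ?R) = sigma_sets UNIV {S. open S}" by (simp add: sets_borel)
    show "sets ?U = sigma_sets UNIV {S. open S}" by (simp add: sets_borel)
    show "range (\<lambda>_. UNIV) \<subseteq> {S::'a set. open S}" by auto
    show "(\<Union>i::nat. UNIV) = (UNIV::'a set)" by auto
    show "emeasure (distr ?U borel ?R) UNIV \<noteq> \<infinity>" for i :: nat
      by (simp add: emeasure_distr U.emeasure_space_1[simplified])
    fix X :: "'a set" assume "X \<in> {S. open S}"
    then have X: "open X" by simp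
    then have Xb: "X \<in> sets borel" by simp
    have pre: "?R -` X \<in> sets borel" using measurable_sets_borel[OF reflect_meas Xb] .
    have "emeasure (distr ?U borel ?R) X = emeasure ?U (?R -` X)"
      using Xb by (simp add: emeasure_distr)
    also have "\<dots> = emeasure lborel (ball 0 1 \<inter> ?R -` X) / emeasure lborel (ball (0::'a) 1)"
      using pre by simp
    also have "emeasure lborel (ball 0 1 \<inter> ?R -` X) = emeasure lborel (ball (0::'a) 1 \<inter> X)"
    proof -
      have o: "open (ball (0::'a) 1 \<inter> X)" using X by auto
      have "emeasure lborel (ball 0 1 \<inter> ?R -` X) = emeasure lebesgue (ball 0 1 \<inter> ?R -` X)"
        using pre by simp
      also have "\<dots> = emeasure lebesgue (?R ` (ball 0 1 \<inter> X))" by (simp only: eqs)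
      also have "\<dots> = emeasure lebesgue (ball (0::'a) 1 \<inter> X)"
        using open_orth_measure[OF reflect_orth[OF w] o] by simp
      also have "\<dots> = emeasure lborel (ball (0::'a) 1 \<inter> X)" using o by simp
      finally show ?thesis .
    qed
    finally show "emeasure (distr ?U borel ?R) X = emeasure ?U X" using Xb by simp
  qed
qed

lemma sets_su[simp]: "sets (sphere_unif::'a::euclidean_space measure) = sets borel"
  by (simp add: sphere_unif_def)

lemma space_su[simp]: "space (sphere_unif::'a::euclidean_space measure) = UNIV"
  by (simp add: sphere_unif_def)

lemma prob_su: "prob_space (sphere_unif::'a::euclidean_space measure)"
  unfolding sphere_unif_def
  by (rule prob_space.prob_space_distr[OF U_prob]) auto

lemma su_inv:
  assumes w: "norm w = 1"
  shows "distr (sphere_unif::'a::euclidean_space measure) borel (reflect w) = sphere_unif"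
proof -
  let ?U = "uniform_measure lborel (ball (0::'a) 1)"
  have "distr (distr ?U borel sgn) borel (reflect w) = distr ?U borel (reflect w \<circ> sgn)"
    by (subst distr_distr) auto
  also have "reflect w \<circ> sgn = sgn \<circ> reflect w" using w by (auto simp: reflect_sgn)
  also have "distr ?U borel (sgn \<circ> reflect w) = distr (distr ?U borel (reflect w)) borel sgn"
    by (subst distr_distr) auto
  also have "\<dots> = distr ?U borel sgn" using U_inv[OF w] by simp
  finally show ?thesis unfolding sphere_unif_def .
qed

lemma su_AE_sphere: "AE x in (sphere_unif::'a::euclidean_space measure). x \<in> sphere 0 1"
  unfolding sphere_unif_def
proof (subst AE_distr_iff)
  show "sgn \<in> measurable (uniform_measure lborel (ball (0::'a) 1)) borel" by simp
  show "{x \<in> space borel. x \<in> sphere (0::'a) 1} \<in> sets borel" by auto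
  show "AE x in uniform_measure lborel (ball (0::'a) 1). sgn x \<in> sphere 0 1"
    by (rule AE_uniform_measureI) (use AE_lborel_singleton[of "0::'a"] in \<open>auto simp: norm_sgn elim!: eventually_mono\<close>)
qed

lemma su_sphere: "emeasure (sphere_unif::'a::euclidean_space measure) (sphere 0 1) = 1"
proof -
  have "AE x in sphere_unif. (x \<in> sphere (0::'a) 1) = (x \<in> UNIV)" using su_AE_sphere by simp
  then have "emeasure (sphere_unif::'a measure) (sphere 0 1) = emeasure sphere_unif (UNIV::'a set)"
    by (rule Measure_Space.emeasure_eq_AE) auto
  then show ?thesis using prob_space.emeasure_space_1[OF prob_su[where 'a='a]] by simp
qed

lemma su_equator:
  assumes "w \<noteq> 0"
  shows "emeasure (sphere_unif::'a::euclidean_space measure) {x. x \<bullet> w = 0} = 0"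
proof -
  let ?Z = "{x::'a. x \<bullet> w = 0}"
  have Zb: "?Z \<in> sets borel" by simp
  have pre: "sgn -` ?Z = ?Z" "{y. sgn y \<bullet> w = 0} = ?Z" by (auto simp: sgn_div_norm)
  have "negligible {x::'a. w \<bullet> x = 0}" using negligible_hyperplane[of w 0] assms by simp
  then have "?Z \<in> null_sets lebesgue" by (simp add: negligible_iff_null_sets inner_commute)
  then have Z0: "emeasure lborel ?Z = 0" using Zb by (simp add: null_sets_def)
  have "emeasure lborel (ball 0 1 \<inter> ?Z) \<le> emeasure lborel ?Z" by (intro emeasure_mono) auto
  then have "emeasure lborel (ball 0 1 \<inter> ?Z) = 0" using Z0 by simp
  then show ?thesis
    unfolding sphere_unif_def using Zb by (simp add: emeasure_distr pre)
qed

lemma su_meas_iff[simp]: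
  fixes h :: "'a::euclidean_space \<Rightarrow> 'b::topological_space"
  shows "h \<in> borel_measurable (sphere_unif::'a measure) \<longleftrightarrow> h \<in> borel_measurable borel"
proof -
  have "measurable (sphere_unif::'a measure) (borel::'b measure) = measurable (borel::'a measure) (borel::'b measure)"
    by (rule measurable_cong_sets) auto
  then show ?thesis by simp
qed

lemma su_integrable:
  fixes h :: "'a::euclidean_space \<Rightarrow> real"
  assumes "h \<in> borel_measurable borel" "\<And>x. \<bar>h x\<bar> \<le> B"
  shows "integrable sphere_unif h"
proof -
  interpret prob_space "sphere_unif::'a measure" by (rule prob_su)
  show ?thesis by (rule integrable_const_bound[where B=B]) (use assms in auto)
qed

lemma su_dens_emeasure:
  fixes h :: "'a::euclidean_space \<Rightarrow> real"
  assumes hm: "h \<in> borel_measurable borel" and nn: "\<And>x. 0 \<le> h x" and bd: "\<And>x. h x \<le> B"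
    and A: "A \<in> sets borel"
  shows "emeasure (density sphere_unif (\<lambda>x. ennreal (h x))) A = ennreal (\<integral>x. indicator A x * h x \<partial>sphere_unif)"
    and "measure (density sphere_unif (\<lambda>x. ennreal (h x))) A = (\<integral>x. indicator A x * h x \<partial>sphere_unif)"
proof -
  have B0: "0 \<le> B" using nn bd order_trans by blast
  have int: "integrable sphere_unif (\<lambda>x. indicator A x * h x)"
    by (rule su_integrable[where B=B]) (use A hm nn bd B0 in \<open>auto simp: indicator_def abs_of_nonneg\<close>)
  have "emeasure (density sphere_unif (\<lambda>x. ennreal (h x))) A = (\<integral>\<^sup>+x. ennreal (h x) * indicator A x \<partial>sphere_unif)"
    using A hm by (subst emeasure_density) auto
  also have "\<dots> = (\<integral>\<^sup>+x. ennreal (indicator A x * h x) \<partial>sphere_unif)"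
    by (intro nn_integral_cong) (auto simp: indicator_def)
  also have "\<dots> = ennreal (\<integral>x. indicator A x * h x \<partial>sphere_unif)"
    using int nn by (intro nn_integral_eq_integral) auto
  finally show e: "emeasure (density sphere_unif (\<lambda>x. ennreal (h x))) A = ennreal (\<integral>x. indicator A x * h x \<partial>sphere_unif)" .
  have "0 \<le> (\<integral>x. indicator A x * h x \<partial>sphere_unif)"
    using nn by (intro integral_nonneg_AE) auto
  then show "measure (density sphere_unif (\<lambda>x. ennreal (h x))) A = (\<integral>x. indicator A x * h x \<partial>sphere_unif)"
    using e by (simp add: measure_def)
qed

lemma dens_prob:
  fixes h :: "'a::euclidean_space \<Rightarrow> real"
  assumes hm: "h \<in> borel_measurable borel" and nn: "\<And>x. 0 \<le> h x" and bd: "\<And>x. h x \<le> B"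
    and int: "(\<integral>x. h x \<partial>sphere_unif) = c"
  shows "\<exists>\<nu>. prob_space \<nu> \<and> sets \<nu> = sets borel \<and> emeasure \<nu> (sphere 0 1) = 1 \<and>
     (\<forall>A\<in>sets borel. (\<integral>x. indicator A x * h x \<partial>sphere_unif) = c * measure \<nu> A) \<and>
     (\<forall>w. norm w = 1 \<longrightarrow> (\<forall>x. h (reflect w x) = h x) \<longrightarrow> distr \<nu> borel (reflect w) = \<nu>)"
proof (cases "c > 0")
  case True
  define h' where "h' x = h x / c" for x
  let ?\<nu> = "density (sphere_unif::'a measure) (\<lambda>x. ennreal (h' x))"
  have h'm: "h' \<in> borel_measurable borel" using hm unfolding h'_def by measurable
  have nn': "0 \<le> h' x" for x using nn True by (simp add: h'_def)
  have bd': "h' x \<le> B / c" for x using bd True by (simp add: h'_def divide_right_mono)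
  have intA: "(\<integral>x. indicator A x * h' x \<partial>sphere_unif) = (\<integral>x. indicator A x * h x \<partial>sphere_unif) / c" for A
  proof -
    have "(\<integral>x. indicator A x * h' x \<partial>sphere_unif) = (\<integral>x. (indicator A x * h x) / c \<partial>sphere_unif)"
      by (simp add: h'_def)
    also have "\<dots> = (\<integral>x. indicator A x * h x \<partial>sphere_unif) / c" by (rule integral_divide_zero)
    finally show ?thesis .
  qed
  have em: "emeasure ?\<nu> A = ennreal ((\<integral>x. indicator A x * h x \<partial>sphere_unif) / c)" if "A \<in> sets borel" for A
    using su_dens_emeasure(1)[OF h'm nn' bd' that] intA by simp
  have mm: "measure ?\<nu> A = (\<integral>x. indicator A x * h x \<partial>sphere_unif) / c" if "A \<in> sets borel" for A
    using su_dens_emeasure(2)[OF h'm nn' bd' that] intA by simp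
  have full: "(\<integral>x. indicator UNIV x * h x \<partial>sphere_unif) = c" using int by simp
  have sph: "(\<integral>x. indicator (sphere 0 1) x * h x \<partial>sphere_unif) = c"
  proof -
    have "(\<integral>x. indicator (sphere 0 1) x * h x \<partial>sphere_unif) = (\<integral>x. h x \<partial>(sphere_unif::'a measure))"
    proof (rule integral_cong_AE)
      show "(\<lambda>x. indicator (sphere 0 1) x * h x) \<in> borel_measurable (sphere_unif::'a measure)"
        using hm by simp (intro borel_measurable_times borel_measurable_indicator, auto)
    qed (use hm su_AE_sphere in \<open>auto elim!: eventually_mono\<close>)
    then show ?thesis using int by simp
  qed
  show ?thesis
  proof (intro exI[of _ ?\<nu>] conjI ballI allI impI)
    show "prob_space ?\<nu>"
      by (rule prob_spaceI) (use em[of UNIV] full True in simp)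
    show "sets ?\<nu> = sets borel" by simp
    show "emeasure ?\<nu> (sphere 0 1) = 1" using em[of "sphere 0 1"] sph True by simp
    fix A :: "'a set" assume "A \<in> sets borel"
    then show "(\<integral>x. indicator A x * h x \<partial>sphere_unif) = c * measure ?\<nu> A" using mm True by simp
  next
    fix w :: 'a assume w: "norm w = 1" and sym: "\<forall>x. h (reflect w x) = h x"
    have "density (distr sphere_unif borel (reflect w)) (\<lambda>x. ennreal (h' x))
       = distr (density sphere_unif (\<lambda>x. ennreal (h' (reflect w x)))) borel (reflect w)"
      by (rule density_distr) (use h'm in auto)
    moreover have "(\<lambda>x. ennreal (h' (reflect w x))) = (\<lambda>x. ennreal (h' x))" using sym by (simp add: h'_def)
    ultimately show "distr ?\<nu> borel (reflect w) = ?\<nu>" using su_inv[OF w] by simp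
  qed
next
  case False
  have c0: "c \<ge> 0" using int nn by (metis integral_nonneg_AE AE_I2)
  with False have c: "c = 0" by simp
  have B0: "0 \<le> B" using nn bd order_trans by blast
  have zero: "(\<integral>x. indicator A x * h x \<partial>sphere_unif) = 0" if "A \<in> sets borel" for A
  proof -
    have "(\<integral>x. indicator A x * h x \<partial>sphere_unif) \<le> (\<integral>x. h x \<partial>(sphere_unif::'a measure))"
      by (rule integral_mono) (use that hm nn bd B0 in \<open>auto intro!: su_integrable[where B=B] simp: indicator_def abs_of_nonneg\<close>)
    moreover have "0 \<le> (\<integral>x. indicator A x * h x \<partial>sphere_unif)"
      using nn by (intro integral_nonneg_AE) auto
    ultimately show ?thesis using int c by simp
  qed
  show ?thesis
    by (intro exI[of _ "sphere_unif::'a measure"])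
       (use prob_su su_sphere su_inv zero c in auto)
qed

lemma reflect_inner_w: "norm w = 1 \<Longrightarrow> reflect w x \<bullet> w = - (x \<bullet> w)"
  unfolding reflect_def by (simp add: inner_diff_left dot_square_norm)

lemma su_inv_int:
  fixes h :: "'a::euclidean_space \<Rightarrow> real"
  assumes w: "norm w = 1" and hm: "h \<in> borel_measurable borel"
  shows "(\<integral>x. h (reflect w x) \<partial>sphere_unif) = (\<integral>x. h x \<partial>(sphere_unif::'a measure))"
proof -
  have "(\<integral>x. h x \<partial>(sphere_unif::'a measure)) = (\<integral>x. h x \<partial>distr sphere_unif borel (reflect w))"
    using su_inv[OF w] by simp
  also have "\<dots> = (\<integral>x. h (reflect w x) \<partial>sphere_unif)"
    by (rule integral_distr) (use hm in auto)
  finally show ?thesis by simp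
qed

lemma core:
  fixes g :: "'a::euclidean_space \<Rightarrow> real" and w :: 'a
  assumes w: "norm w = 1" and gm: "g \<in> borel_measurable borel" and nn: "\<And>x. 0 \<le> g x"
    and bd: "\<And>x. g x \<le> B"
    and int1: "(\<integral>x. g x \<partial>sphere_unif) = 1"
    and mono: "\<And>x. x \<bullet> w < 0 \<Longrightarrow> g x \<le> g (reflect w x)"
  shows "measure (density sphere_unif (\<lambda>x. ennreal (g x))) (halfspace_neg w)
           \<le> measure (density sphere_unif (\<lambda>x. ennreal (g x))) (halfspace_pos w)
     \<and> DPS w (2 * measure (density sphere_unif (\<lambda>x. ennreal (g x))) (halfspace_neg w))
             (density sphere_unif (\<lambda>x. ennreal (g x)))"
proof -
  let ?\<sigma> = "sphere_unif::'a measure"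
  let ?\<mu> = "density sphere_unif (\<lambda>x. ennreal (g x))"
  let ?R = "reflect w"
  define Nn where "Nn = {x::'a. x \<bullet> w < 0}"
  define Pp where "Pp = {x::'a. x \<bullet> w > 0}"
  define Z where "Z = {x::'a. x \<bullet> w = 0}"
  define gs where "gs x = min (g x) (g (?R x))" for x
  have B0: "0 \<le> B" using nn bd order_trans by blast
  have w0: "w \<noteq> 0" using w by auto
  have Nnb[measurable]: "Nn \<in> sets borel" unfolding Nn_def by measurable
  have Ppb[measurable]: "Pp \<in> sets borel" unfolding Pp_def by measurable
  have Zb[measurable]: "Z \<in> sets borel" unfolding Z_def by measurable
  have gm'[measurable]: "g \<in> borel_measurable borel" by (rule gm)
  have gsm[measurable]: "gs \<in> borel_measurable borel" unfolding gs_def by measurable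
  have RR: "?R (?R x) = x" for x using w by (simp add: reflect_invol)
  have Rw: "?R x \<bullet> w = - (x \<bullet> w)" for x using w by (simp add: reflect_inner_w)
  have indN: "indicator Nn (?R x) = (indicator Pp x :: real)" for x
    by (simp add: Nn_def Pp_def Rw indicator_def)
  have indP: "indicator Pp (?R x) = (indicator Nn x :: real)" for x
    by (simp add: Nn_def Pp_def Rw indicator_def)
  have gs_nn: "0 \<le> gs x" for x using nn by (simp add: gs_def)
  have gs_le: "gs x \<le> g x" for x by (simp add: gs_def)
  have gs_sym: "gs (?R x) = gs x" for x by (simp add: gs_def RR)
  have gs_bd: "gs x \<le> B" for x using gs_le bd order_trans by blast
  have d_bd: "g x - gs x \<le> B" for x using gs_nn[of x] bd[of x] by linarith
  have intg: "integrable ?\<sigma> h" if "h \<in> borel_measurable borel" "\<And>x. \<bar>h x\<bar> \<le> C" for h :: "'a \<Rightarrow> real" and C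
    using su_integrable[OF that] .
  have AEZ: "AE x in ?\<sigma>. x \<notin> Z"
    by (rule AE_not_in) (use su_equator[OF w0] in \<open>simp add: Z_def null_sets_def\<close>)
  have AES: "AE x in ?\<sigma>. x \<in> sphere 0 1" by (rule su_AE_sphere)
  define a where "a = (\<integral>x. indicator Nn x * g x \<partial>?\<sigma>)"
  define b where "b = (\<integral>x. indicator Pp x * g x \<partial>?\<sigma>)"
  have mu_eq: "measure ?\<mu> A = (\<integral>x. indicator A x * g x \<partial>?\<sigma>)" if "A \<in> sets borel" for A
    by (rule su_dens_emeasure(2)[OF gm nn bd that])
  have hn_b: "halfspace_neg w \<in> sets borel" unfolding halfspace_neg_def by measurable
  have hp_b: "halfspace_pos w \<in> sets borel" unfolding halfspace_pos_def by measurable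
  have p0: "measure ?\<mu> (halfspace_neg w) = a"
    unfolding mu_eq[OF hn_b] a_def
    by (rule integral_cong_AE) (use AES in \<open>auto simp: halfspace_neg_def Nn_def indicator_def elim!: eventually_mono\<close>)
  have pb: "b \<le> measure ?\<mu> (halfspace_pos w)"
    unfolding mu_eq[OF hp_b] b_def
    by (rule integral_mono_AE)
       (use AES nn bd B0 in \<open>auto simp: halfspace_pos_def Pp_def indicator_def abs_of_nonneg
          intro!: intg[where C=B] elim!: eventually_mono\<close>)
  have ab: "a \<le> b"
  proof -
    have "a \<le> (\<integral>x. indicator Nn x * g (?R x) \<partial>?\<sigma>)"
      unfolding a_def
      by (rule integral_mono) (use nn bd B0 mono in \<open>auto simp: Nn_def indicator_def abs_of_nonneg
          intro!: intg[where C=B]\<close>)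
    also have "\<dots> = (\<integral>x. indicator Pp (?R x) * g (?R x) \<partial>?\<sigma>)" by (simp add: indP)
    also have "\<dots> = b" unfolding b_def by (rule su_inv_int[OF w]) measurable
    finally show ?thesis .
  qed
  have gs_split: "gs x = indicator Nn x * g x + indicator Pp x * g (?R x) + indicator Z x * gs x" for x
  proof -
    consider "x \<bullet> w < 0" | "x \<bullet> w > 0" | "x \<bullet> w = 0" by linarith
    then show ?thesis
    proof cases
      case 1 then show ?thesis using mono[OF 1] by (simp add: gs_def Nn_def Pp_def Z_def)
    next
      case 2
      have "?R x \<bullet> w < 0" using 2 Rw by simp
      then have "g (?R x) \<le> g x" using mono[of "?R x"] RR by simp
      then show ?thesis using 2 by (simp add: gs_def Nn_def Pp_def Z_def)
    next
      case 3 then show ?thesis by (simp add: Nn_def Pp_def Z_def)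
    qed
  qed
  have int_gs: "(\<integral>x. gs x \<partial>?\<sigma>) = 2 * a"
  proof -
    have i1: "integrable ?\<sigma> (\<lambda>x. indicator Nn x * g x)"
      by (rule intg[where C=B]) (use nn bd B0 in \<open>auto simp: indicator_def abs_of_nonneg\<close>)
    have i2: "integrable ?\<sigma> (\<lambda>x. indicator Pp x * g (?R x))"
      by (rule intg[where C=B]) (use nn bd B0 in \<open>auto simp: indicator_def abs_of_nonneg\<close>)
    have i3: "integrable ?\<sigma> (\<lambda>x. indicator Z x * gs x)"
      by (rule intg[where C=B]) (use gs_nn gs_le bd B0 in \<open>auto simp: indicator_def abs_of_nonneg intro: order_trans\<close>)
    have e2: "(\<integral>x. indicator Pp x * g (?R x) \<partial>?\<sigma>) = a"
    proof -
      have "(\<integral>x. indicator Pp x * g (?R x) \<partial>?\<sigma>) = (\<integral>x. indicator Nn (?R x) * g (?R x) \<partial>?\<sigma>)"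
        by (simp add: indN)
      also have "\<dots> = a" unfolding a_def by (rule su_inv_int[OF w]) measurable
      finally show ?thesis .
    qed
    have e3: "(\<integral>x. indicator Z x * gs x \<partial>?\<sigma>) = (\<integral>x. 0 \<partial>?\<sigma>)"
      by (rule integral_cong_AE) (use AEZ in \<open>auto elim!: eventually_mono\<close>)
    have "(\<integral>x. gs x \<partial>?\<sigma>) = (\<integral>x. indicator Nn x * g x + indicator Pp x * g (?R x) + indicator Z x * gs x \<partial>?\<sigma>)"
      by (simp only: gs_split[symmetric])
    also have "\<dots> = a + a + 0"
      using i1 i2 i3 e2 e3 by (simp add: a_def)
    finally show ?thesis by simp
  qed
  obtain \<nu>1 where \<nu>1: "prob_space \<nu>1" "sets \<nu>1 = sets borel" "emeasure \<nu>1 (sphere 0 1) = 1"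
     "\<forall>A\<in>sets borel. (\<integral>x. indicator A x * (g x - gs x) \<partial>?\<sigma>) = (1 - 2 * a) * measure \<nu>1 A"
  proof -
    have "(\<integral>x. g x - gs x \<partial>?\<sigma>) = 1 - 2 * a"
    proof -
      have "(\<integral>x. g x - gs x \<partial>?\<sigma>) = (\<integral>x. g x \<partial>?\<sigma>) - (\<integral>x. gs x \<partial>?\<sigma>)"
        by (rule Bochner_Integration.integral_diff) (use nn bd gs_nn gs_bd B0 in \<open>auto intro!: intg[where C=B] simp: abs_of_nonneg\<close>)
      then show ?thesis using int1 int_gs by simp
    qed
    moreover have "(\<lambda>x. g x - gs x) \<in> borel_measurable borel" by measurable
    moreover have "0 \<le> g x - gs x" for x using gs_le[of x] by linarith
    moreover have "g x - gs x \<le> B" for x using gs_nn[of x] bd[of x] by linarith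
    ultimately have "\<exists>\<nu>. prob_space \<nu> \<and> sets \<nu> = sets borel \<and> emeasure \<nu> (sphere 0 1) = 1 \<and>
     (\<forall>A\<in>sets borel. (\<integral>x. indicator A x * (g x - gs x) \<partial>?\<sigma>) = (1 - 2 * a) * measure \<nu> A)"
      using dens_prob[where h="\<lambda>x. g x - gs x" and B=B and c="1 - 2 * a"] by blast
    then show ?thesis using that by blast
  qed
  obtain \<nu>2 where \<nu>2: "prob_space \<nu>2" "sets \<nu>2 = sets borel" "emeasure \<nu>2 (sphere 0 1) = 1"
     "\<forall>A\<in>sets borel. (\<integral>x. indicator A x * gs x \<partial>?\<sigma>) = (2 * a) * measure \<nu>2 A"
     "distr \<nu>2 borel ?R = \<nu>2"
  proof -
    from dens_prob[where h=gs and B=B, OF gsm gs_nn gs_bd int_gs] w gs_sym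
    show ?thesis using that by blast
  qed
  have dps: "DPS w (2 * a) ?\<mu>"
    unfolding DPS_def
  proof (rule exI[of _ \<nu>1], rule exI[of _ \<nu>2], intro conjI ballI)
    fix A :: "'a set" assume A: "A \<in> sets borel"
    have "measure ?\<mu> A = (\<integral>x. indicator A x * g x \<partial>?\<sigma>)" by (rule mu_eq[OF A])
    also have "\<dots> = (\<integral>x. indicator A x * (g x - gs x) + indicator A x * gs x \<partial>?\<sigma>)"
      by (simp add: algebra_simps)
    also have "\<dots> = (\<integral>x. indicator A x * (g x - gs x) \<partial>?\<sigma>) + (\<integral>x. indicator A x * gs x \<partial>?\<sigma>)"
      by (rule Bochner_Integration.integral_add) (use A nn bd gs_nn gs_le gs_bd d_bd B0 in \<open>auto intro!: intg[where C=B] simp: indicator_def abs_of_nonneg\<close>)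
    also have "\<dots> = (1 - 2 * a) * measure \<nu>1 A + 2 * a * measure \<nu>2 A"
      using \<nu>1(4) \<nu>2(4) A by simp
    finally show "measure ?\<mu> A = (1 - 2 * a) * measure \<nu>1 A + 2 * a * measure \<nu>2 A" .
  qed (use \<nu>1 \<nu>2 in auto)
  show ?thesis using dps p0 pb ab by simp
qed

lemma reflect_neg[simp]: "reflect (-w) = reflect w"
  by (rule ext) (simp add: reflect_def)

lemma DPS_neg: "DPS (-w) e M = DPS w e M"
  by (simp add: DPS_def)

theorem lemma5:
  fixes f :: "real \<Rightarrow> real" and lam :: real and y w :: "'a::euclidean_space"
  assumes f_pos: "\<forall>t\<in>{-1..1}. f t > 0"
    and f_mono: "mono_on {-1..1} f \<or> antimono_on {-1..1} f"
    and f_cont: "continuous_on {-1..1} f"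
    and markov: "markov_zonal TYPE('a) f"
    and lam_lin: "\<forall>e::'a. \<forall>x\<in>sphere 0 1. kernel_op f (\<lambda>z. z \<bullet> e) x = lam * (x \<bullet> e)"
    and lam_pos: "lam > 0"
    and lam_max: "\<forall>k\<ge>1. \<forall>g::'a \<Rightarrow> real. \<forall>c.
                    spherical_harmonic k g \<and> (\<exists>x\<in>sphere 0 1. g x \<noteq> 0)
                    \<and> (\<forall>x\<in>sphere 0 1. kernel_op f g x = c * g x) \<longrightarrow> \<bar>c\<bar> \<le> lam"
    and y: "y \<in> sphere 0 1"
    and w: "w \<in> sphere 0 1"
  shows "let \<mu> = density sphere_unif (\<lambda>x. ennreal (f (x \<bullet> y)));
             p = min (measure \<mu> (halfspace_pos w)) (measure \<mu> (halfspace_neg w))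
         in DPS w (2 * p) \<mu>"
proof -
  let ?\<sigma> = "sphere_unif::'a measure"
  define cl where "cl t = max (-1) (min 1 t)" for t :: real
  define F where "F t = f (cl t)" for t
  define g where "g x = F (x \<bullet> y)" for x :: 'a
  have cl_in: "cl t \<in> {-1..1}" for t by (auto simp: cl_def)
  have cl_id: "t \<in> {-1..1} \<Longrightarrow> cl t = t" for t by (auto simp: cl_def)
  have cl_mono: "s \<le> t \<Longrightarrow> cl s \<le> cl t" for s t by (auto simp: cl_def)
  have Fpos: "F t > 0" for t using f_pos cl_in by (simp add: F_def)
  have FM: "mono F \<or> antimono F"
  proof (cases "mono_on {-1..1} f")
    case True
    then have "mono F" unfolding F_def by (intro monoI) (auto intro!: mono_onD[OF True] cl_in cl_mono)
    then show ?thesis by simp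
  next
    case False
    then have A: "antimono_on {-1..1} f" using f_mono by simp
    then have "antimono F" unfolding F_def by (intro antimonoI) (auto intro!: monotone_onD[OF A] cl_in cl_mono)
    then show ?thesis by simp
  qed
  have Fbd: "F t \<le> f (-1) + f 1" for t
  proof -
    have p1: "f (-1) > 0" "f 1 > 0" using f_pos by auto
    have Fc: "F t = F (cl t)" by (simp add: F_def cl_def)
    have "cl t \<le> 1" "-1 \<le> cl t" using cl_in[of t] by auto
    then have "F t \<le> F 1 \<or> F t \<le> F (-1)"
      using FM unfolding Fc by (auto simp: mono_def antimono_def)
    moreover have "F 1 = f 1" "F (-1) = f (-1)" by (simp_all add: F_def cl_def)
    ultimately show ?thesis using p1 by auto
  qed
  have Fcont: "continuous_on UNIV F"
    unfolding F_def by (rule continuous_on_compose2[OF f_cont]) (auto simp: cl_def intro!: continuous_intros)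
  have gm: "g \<in> borel_measurable borel"
    unfolding g_def
    by (rule borel_measurable_continuous_onI, rule continuous_on_compose2[OF Fcont]) (auto intro!: continuous_intros)
  have sphere_inner: "x \<bullet> y \<in> {-1..1}" if "x \<in> sphere 0 1" for x :: 'a
  proof -
    have "\<bar>x \<bullet> y\<bar> \<le> norm x * norm y" by (rule Cauchy_Schwarz_ineq2)
    then show ?thesis using that y by (auto simp: abs_le_iff)
  qed
  have fg: "f (x \<bullet> y) = g x" if "x \<in> sphere 0 1" for x
    using sphere_inner[OF that] by (simp add: g_def F_def cl_id)
  have dens_eq: "density ?\<sigma> (\<lambda>x. ennreal (f (x \<bullet> y))) = density ?\<sigma> (\<lambda>x. ennreal (g x))"
  proof -
    have "(\<lambda>A. \<integral>\<^sup>+ x. ennreal (f (x \<bullet> y)) * indicator A x \<partial>?\<sigma>) = (\<lambda>A. \<integral>\<^sup>+ x. ennreal (g x) * indicator A x \<partial>?\<sigma>)"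
      by (rule ext, rule nn_integral_cong_AE) (use su_AE_sphere fg in \<open>auto elim!: eventually_mono\<close>)
    then show ?thesis unfolding density_def by simp
  qed
  have int1: "(\<integral>x. g x \<partial>?\<sigma>) = 1"
  proof -
    have m1: "(\<integral>z. f (y \<bullet> z) \<partial>?\<sigma>) = 1" using markov y unfolding markov_zonal_def by auto
    then have "integrable ?\<sigma> (\<lambda>z. f (y \<bullet> z))" using not_integrable_integral_eq by force
    then have fm: "(\<lambda>z. f (y \<bullet> z)) \<in> borel_measurable ?\<sigma>" by (rule borel_measurable_integrable)
    have "(\<integral>x. g x \<partial>?\<sigma>) = (\<integral>z. f (y \<bullet> z) \<partial>?\<sigma>)"
      by (rule integral_cong_AE) (use gm fm su_AE_sphere fg in \<open>auto simp: inner_commute elim!: eventually_mono\<close>)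
    then show ?thesis using m1 by simp
  qed
  have gnn: "0 \<le> g x" for x using Fpos[of "x \<bullet> y"] by (simp add: g_def)
  have gbd: "g x \<le> f (-1) + f 1" for x using Fbd by (simp add: g_def)
  have nw: "norm w = 1" using w by simp
  have Ry: "reflect w x \<bullet> y = x \<bullet> y - 2 * (x \<bullet> w) * (w \<bullet> y)" for x
    by (simp add: reflect_def inner_diff_left)
  define \<mu> where "\<mu> = density ?\<sigma> (\<lambda>x. ennreal (g x))"
  have mu_eq: "measure \<mu> A = (\<integral>x. indicator A x * g x \<partial>?\<sigma>)" if "A \<in> sets borel" for A
    unfolding \<mu>_def by (rule su_dens_emeasure(2)[OF gm gnn gbd that])
  have w0: "w \<noteq> 0" using nw by auto
  have AEZ: "AE x in ?\<sigma>. x \<bullet> w \<noteq> 0"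
  proof -
    have "AE x in ?\<sigma>. x \<notin> {x. x \<bullet> w = 0}"
      by (rule AE_not_in) (use su_equator[OF w0] in \<open>simp add: null_sets_def\<close>)
    then show ?thesis by simp
  qed
  have ae_eq: "measure \<mu> A = measure \<mu> A'" if "A \<in> sets borel" "A' \<in> sets borel"
     "\<And>x. x \<bullet> w \<noteq> 0 \<Longrightarrow> x \<in> A \<longleftrightarrow> x \<in> A'" for A A'
    unfolding mu_eq[OF that(1)] mu_eq[OF that(2)]
    by (rule integral_cong_AE) (use AEZ that gm in \<open>auto simp: indicator_def elim!: eventually_mono\<close>)
  have hb: "halfspace_pos v \<in> sets borel" "halfspace_neg v \<in> sets borel" for v :: 'a
    unfolding halfspace_pos_def halfspace_neg_def by measurable
  have main: "DPS w (2 * min (measure \<mu> (halfspace_pos w)) (measure \<mu> (halfspace_neg w))) \<mu>"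
  proof (cases "(mono F \<and> w \<bullet> y \<ge> 0) \<or> (antimono F \<and> w \<bullet> y \<le> 0)")
    case True
    have mono: "g x \<le> g (reflect w x)" if "x \<bullet> w < 0" for x
    proof -
      from True show ?thesis
      proof
        assume a: "mono F \<and> w \<bullet> y \<ge> 0"
        have "x \<bullet> y \<le> reflect w x \<bullet> y" unfolding Ry using that a
          by (simp add: mult_nonpos_nonneg)
        then show ?thesis using a by (simp add: g_def monoD)
      next
        assume a: "antimono F \<and> w \<bullet> y \<le> 0"
        have "reflect w x \<bullet> y \<le> x \<bullet> y" unfolding Ry using that a
          by (simp add: mult_nonpos_nonpos)
        then show ?thesis using a by (simp add: g_def antimonoD)
      qed
    qed
    have c: "measure \<mu> (halfspace_neg w) \<le> measure \<mu> (halfspace_pos w)"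
        "DPS w (2 * measure \<mu> (halfspace_neg w)) \<mu>"
      using core[OF nw gm gnn gbd int1 mono] unfolding \<mu>_def by auto
    have "min (measure \<mu> (halfspace_pos w)) (measure \<mu> (halfspace_neg w)) = measure \<mu> (halfspace_neg w)"
      using c(1) by (rule min_absorb2)
    then show ?thesis using c(2) by simp
  next
    case False
    then have F2: "(mono F \<and> w \<bullet> y \<le> 0) \<or> (antimono F \<and> w \<bullet> y \<ge> 0)" using FM by auto
    have nw': "norm (-w) = 1" using nw by simp
    have mono: "g x \<le> g (reflect (-w) x)" if "x \<bullet> (-w) < 0" for x
    proof -
      have xw: "x \<bullet> w > 0" using that by simp
      from F2 show ?thesis
      proof
        assume a: "mono F \<and> w \<bullet> y \<le> 0"
        have "x \<bullet> y \<le> reflect w x \<bullet> y" unfolding Ry using xw a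
          by (simp add: mult_nonneg_nonpos)
        then show ?thesis using a by (simp add: g_def monoD)
      next
        assume a: "antimono F \<and> w \<bullet> y \<ge> 0"
        have "reflect w x \<bullet> y \<le> x \<bullet> y" unfolding Ry using xw a
          by simp
        then show ?thesis using a by (simp add: g_def antimonoD)
      qed
    qed
    have c: "measure \<mu> (halfspace_neg (-w)) \<le> measure \<mu> (halfspace_pos (-w))"
        "DPS (-w) (2 * measure \<mu> (halfspace_neg (-w))) \<mu>"
      using core[OF nw' gm gnn gbd int1 mono] unfolding \<mu>_def by auto
    have e1: "measure \<mu> (halfspace_neg (-w)) = measure \<mu> (halfspace_pos w)"
      by (rule ae_eq[OF hb(2) hb(1)]) (auto simp: halfspace_pos_def halfspace_neg_def)
    have e2: "measure \<mu> (halfspace_pos (-w)) = measure \<mu> (halfspace_neg w)"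
      by (rule ae_eq[OF hb(1) hb(2)]) (auto simp: halfspace_pos_def halfspace_neg_def)
    have "min (measure \<mu> (halfspace_pos w)) (measure \<mu> (halfspace_neg w)) = measure \<mu> (halfspace_pos w)"
      using c(1) e1 e2 by (simp add: min_absorb1)
    then show ?thesis using c(2) e1 by (simp add: DPS_neg)
  qed
  show ?thesis using main dens_eq unfolding \<mu>_def Let_def by simp
qed

end
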